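(* Let $m=2$ and $i\in[n]$. If $g$ is a nonzero element of $\mathrm{LSym}$ and $g/\kappa_i\in\mathbb{C}[\mathbf{a},\mathbf{b}]$, then $g/\kappa_i\in\mathrm{LSym}$.
   Context: Variables $a_1,\dots,a_n,b_1,\dots,b_n$ (subscripts mod $n$), where $a_i=x_1^i$, $b_i=x_2^i$. $\mathrm{LSym}$ is the $\mathbb{C}$-subalgebra of $\mathbb{C}[\mathbf{a},\mathbf{b}]$ generated by $a_j+b_{j-1}$ and $a_jb_j$ for $j\in[n]$. $\kappa_i=\sum_{k=0}^{n-1}b_ib_{i+1}\cdots b_{i+k-1}a_{i+k+1}\cdots a_{i+n-1}$. *)

theory Defs
  imports Complex_Main "HOL-Library.Poly_Mapping"
begin

text \<open>Polynomials in commuting variables indexed by pairs (s, j): the variable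
  x_s^j, where s \<in> {1,2} (m = 2) and j \<in> {0..<n} is the index taken mod n.\<close>

type_synonym var = "nat \<times> nat"
type_synonym cpoly = "(var \<Rightarrow>\<^sub>0 nat) \<Rightarrow>\<^sub>0 complex"

definition PVar :: "var \<Rightarrow> cpoly" where
  "PVar v = Poly_Mapping.single (Poly_Mapping.single v 1) 1"

definition PConst :: "complex \<Rightarrow> cpoly" where
  "PConst c = Poly_Mapping.single 0 c"

definition avar :: "nat \<Rightarrow> int \<Rightarrow> cpoly" where
  "avar n i = PVar (1, nat (i mod int n))"

definition bvar :: "nat \<Rightarrow> int \<Rightarrow> cpoly" where
  "bvar n i = PVar (2, nat (i mod int n))"

definition Cab :: "nat \<Rightarrow> cpoly set" where
  "Cab n = {p. \<forall>m \<in> Poly_Mapping.keys p. Poly_Mapping.keys m \<subseteq> {1,2} \<times> {..<n}}"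

inductive_set LSym :: "nat \<Rightarrow> cpoly set" for n :: nat where
  const: "PConst c \<in> LSym n"
| gen1: "j \<in> {1..n} \<Longrightarrow> avar n (int j) + bvar n (int j - 1) \<in> LSym n"
| gen2: "j \<in> {1..n} \<Longrightarrow> avar n (int j) * bvar n (int j) \<in> LSym n"
| add: "p \<in> LSym n \<Longrightarrow> q \<in> LSym n \<Longrightarrow> p + q \<in> LSym n"
| mult: "p \<in> LSym n \<Longrightarrow> q \<in> LSym n \<Longrightarrow> p * q \<in> LSym n"

definition kappa :: "nat \<Rightarrow> int \<Rightarrow> cpoly" where
  "kappa n i = (\<Sum>k<n. (\<Prod>j<k. bvar n (i + int j)) *
                        (\<Prod>j\<in>{k+1..<n}. avar n (i + int j)))"

end

theory Submission
  imports Defs "HOL-Library.Product_Lexorder"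
begin


abbreviation lk :: "('a \<Rightarrow>\<^sub>0 'b) \<Rightarrow> 'a \<Rightarrow> 'b::zero" where "lk \<equiv> Poly_Mapping.lookup"
abbreviation ks :: "('a \<Rightarrow>\<^sub>0 'b::zero) \<Rightarrow> 'a set" where "ks \<equiv> Poly_Mapping.keys"
abbreviation sg :: "'a \<Rightarrow> 'b \<Rightarrow> ('a \<Rightarrow>\<^sub>0 'b::zero)" where "sg \<equiv> Poly_Mapping.single"

definition monom :: "(var \<Rightarrow> cpoly) \<Rightarrow> (var \<Rightarrow>\<^sub>0 nat) \<Rightarrow> cpoly" where
  "monom \<sigma> m = (\<Prod>v\<in>ks m. \<sigma> v ^ lk m v)"

definition evp :: "(var \<Rightarrow> cpoly) \<Rightarrow> cpoly \<Rightarrow> cpoly" where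
  "evp \<sigma> p = (\<Sum>m\<in>ks p. PConst (lk p m) * monom \<sigma> m)"

lemma PConst_0[simp]: "PConst 0 = 0" by (simp add: PConst_def)
lemma PConst_1[simp]: "PConst 1 = 1" by (simp add: PConst_def)
lemma PConst_add: "PConst (a + b) = PConst a + PConst b" by (simp add: PConst_def single_add)
lemma PConst_mult: "PConst (a * b) = PConst a * PConst b" by (simp add: PConst_def mult_single)
lemma PConst_diff: "PConst (a - b) = PConst a - PConst b" by (simp add: PConst_def single_diff)

lemma monom_superset:
  assumes "finite K" "ks m \<subseteq> K"
  shows "monom \<sigma> m = (\<Prod>v\<in>K. \<sigma> v ^ lk m v)"
  unfolding monom_def
  by (rule prod.mono_neutral_left) (use assms in \<open>auto simp: in_keys_iff\<close>)

lemma monom_zero[simp]: "monom \<sigma> 0 = 1" by (simp add: monom_def)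

lemma monom_add: "monom \<sigma> (m1 + m2) = monom \<sigma> m1 * monom \<sigma> m2"
proof -
  let ?K = "ks m1 \<union> ks m2"
  have f: "finite ?K" by simp
  have "monom \<sigma> (m1 + m2) = (\<Prod>v\<in>?K. \<sigma> v ^ lk (m1 + m2) v)"
    by (rule monom_superset[OF f keys_add])
  also have "\<dots> = (\<Prod>v\<in>?K. \<sigma> v ^ lk m1 v * \<sigma> v ^ lk m2 v)"
    by (simp add: lookup_add power_add)
  also have "\<dots> = (\<Prod>v\<in>?K. \<sigma> v ^ lk m1 v) * (\<Prod>v\<in>?K. \<sigma> v ^ lk m2 v)"
    by (rule prod.distrib)
  also have "\<dots> = monom \<sigma> m1 * monom \<sigma> m2"
    using monom_superset[OF f, of m1 \<sigma>] monom_superset[OF f, of m2 \<sigma>] by simp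
  finally show ?thesis .
qed



lemma evp_superset:
  assumes "finite M" "ks p \<subseteq> M"
  shows "evp \<sigma> p = (\<Sum>m\<in>M. PConst (lk p m) * monom \<sigma> m)"
  unfolding evp_def
  by (rule sum.mono_neutral_left) (use assms in \<open>auto simp: in_keys_iff\<close>)

lemma evp_zero[simp]: "evp \<sigma> 0 = 0" by (simp add: evp_def)

lemma evp_add: "evp \<sigma> (p + q) = evp \<sigma> p + evp \<sigma> q"
proof -
  let ?M = "ks p \<union> ks q"
  have f: "finite ?M" by simp
  have "evp \<sigma> (p + q) = (\<Sum>m\<in>?M. PConst (lk (p+q) m) * monom \<sigma> m)"
    by (rule evp_superset[OF f keys_add])
  also have "\<dots> = (\<Sum>m\<in>?M. PConst (lk p m) * monom \<sigma> m + PConst (lk q m) * monom \<sigma> m)"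
    by (simp add: lookup_add PConst_add distrib_right)
  also have "\<dots> = evp \<sigma> p + evp \<sigma> q"
    using evp_superset[OF f, of p \<sigma>] evp_superset[OF f, of q \<sigma>] by (simp add: sum.distrib)
  finally show ?thesis .
qed

lemma evp_single: "evp \<sigma> (sg m c) = PConst c * monom \<sigma> m"
  by (simp add: evp_def)

lemma evp_sum: "evp \<sigma> (sum f A) = (\<Sum>a\<in>A. evp \<sigma> (f a))"
  by (induction A rule: infinite_finite_induct) (auto simp: evp_add)

lemma pm_expansion: "p = (\<Sum>m\<in>ks p. sg m (lk p m))"
proof (rule poly_mapping_eqI)
  fix k
  show "lk p k = lk (\<Sum>m\<in>ks p. sg m (lk p m)) k"
    by (simp add: lookup_sum lookup_single when_def in_keys_iff)
qed

lemma evp_mult: "evp \<sigma> (p * q) = evp \<sigma> p * evp \<sigma> q"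
proof -
  have "p * q = (\<Sum>a\<in>ks p. sg a (lk p a)) * (\<Sum>b\<in>ks q. sg b (lk q b))"
    using pm_expansion[of p] pm_expansion[of q] by simp
  also have "\<dots> = (\<Sum>a\<in>ks p. \<Sum>b\<in>ks q. sg (a + b) (lk p a * lk q b))"
    by (simp add: sum_product mult_single)
  finally have e: "p * q = \<dots>" .
  have "evp \<sigma> (p * q) = (\<Sum>a\<in>ks p. \<Sum>b\<in>ks q. PConst (lk p a) * monom \<sigma> a * (PConst (lk q b) * monom \<sigma> b))"
    unfolding e by (simp add: evp_sum evp_single monom_add PConst_mult ac_simps)
  also have "\<dots> = evp \<sigma> p * evp \<sigma> q"
    by (simp add: evp_def sum_product)
  finally show ?thesis .
qed

lemma evp_const[simp]: "evp \<sigma> (PConst c) = PConst c"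
  by (simp add: PConst_def evp_single[unfolded PConst_def])

lemma evp_one[simp]: "evp \<sigma> 1 = 1"
  using evp_const[of \<sigma> 1] by simp

lemma evp_var[simp]: "evp \<sigma> (PVar v) = \<sigma> v"
  by (simp add: PVar_def evp_single monom_def)

lemma evp_uminus: "evp \<sigma> (- p) = - evp \<sigma> p"
  using evp_add[of \<sigma> p "-p"] by (simp add: eq_neg_iff_add_eq_0 add.commute)

lemma evp_diff: "evp \<sigma> (p - q) = evp \<sigma> p - evp \<sigma> q"
  using evp_add[of \<sigma> p "-q"] evp_uminus[of \<sigma> q] by simp

lemma evp_prod: "evp \<sigma> (prod f A) = (\<Prod>a\<in>A. evp \<sigma> (f a))"
  by (induction A rule: infinite_finite_induct) (auto simp: evp_mult)

lemma evp_power: "evp \<sigma> (p ^ k) = evp \<sigma> p ^ k"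
  by (induction k) (auto simp: evp_mult)

lemma evp_smult: "evp \<sigma> (PConst c * p) = PConst c * evp \<sigma> p"
  by (simp add: evp_mult)

lemma evp_monom: "evp \<tau> (monom \<sigma> m) = monom (\<lambda>v. evp \<tau> (\<sigma> v)) m"
  by (simp add: monom_def evp_prod evp_power)

lemma evp_evp: "evp \<tau> (evp \<sigma> p) = evp (\<lambda>v. evp \<tau> (\<sigma> v)) p"
proof -
  have "evp \<tau> (evp \<sigma> p) = (\<Sum>m\<in>ks p. evp \<tau> (PConst (lk p m) * monom \<sigma> m))"
    by (simp only: evp_def[of \<sigma> p] evp_sum)
  also have "\<dots> = (\<Sum>m\<in>ks p. PConst (lk p m) * monom (\<lambda>v. evp \<tau> (\<sigma> v)) m)"
    by (simp only: evp_smult evp_monom)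
  also have "\<dots> = evp (\<lambda>v. evp \<tau> (\<sigma> v)) p"
    by (simp only: evp_def)
  finally show ?thesis .
qed

lemma PVar_power: "PVar v ^ k = sg (sg v k) 1"
  by (induction k) (auto simp: PVar_def mult_single single_add[symmetric] add.commute)

lemma prod_single1: "(\<Prod>v\<in>K. sg (f v) (1::complex)) = sg (\<Sum>v\<in>K. f v) 1"
  by (induction K rule: infinite_finite_induct) (auto simp: mult_single)

lemma monom_PVar: "monom PVar m = sg m 1"
proof -
  have "monom PVar m = sg (\<Sum>v\<in>ks m. sg v (lk m v)) 1"
    by (simp add: monom_def PVar_power prod_single1)
  also have "(\<Sum>v\<in>ks m. sg v (lk m v)) = m"
    using pm_expansion[of m] by simp
  finally show ?thesis .
qed

lemma evp_PVar: "evp PVar p = p"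
proof -
  have "evp PVar p = (\<Sum>m\<in>ks p. sg m (lk p m))"
    by (simp add: evp_def monom_PVar PConst_def mult_single)
  then show ?thesis using pm_expansion[of p] by simp
qed

lemma evp_cong: "(\<And>v. \<sigma> v = \<tau> v) \<Longrightarrow> evp \<sigma> p = evp \<tau> p"
  by (metis ext)


definition lm :: "cpoly \<Rightarrow> (var \<Rightarrow>\<^sub>0 nat)" where "lm p = Max (ks p)"
definition lc :: "cpoly \<Rightarrow> complex" where "lc p = lk p (lm p)"

lemma lm_in: "p \<noteq> 0 \<Longrightarrow> lm p \<in> ks p"
  unfolding lm_def by (rule Max_in) auto

lemma lm_ge: "m \<in> ks p \<Longrightarrow> m \<le> lm p"
  unfolding lm_def by (rule Max_ge) auto

lemma lc_nz: "p \<noteq> 0 \<Longrightarrow> lc p \<noteq> 0"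
  unfolding lc_def using lm_in in_keys_iff by blast

lemma lm_eqI: "m \<in> ks p \<Longrightarrow> (\<And>m'. m' \<in> ks p \<Longrightarrow> m' \<le> m) \<Longrightarrow> lm p = m"
  unfolding lm_def by (rule Max_eqI) auto

lemma mult_expansion:
  "p * q = (\<Sum>a\<in>ks p. \<Sum>b\<in>ks q. sg (a + b) (lk p a * lk q b))"
proof -
  have "p * q = (\<Sum>a\<in>ks p. sg a (lk p a)) * (\<Sum>b\<in>ks q. sg b (lk q b))"
    using pm_expansion[of p] pm_expansion[of q] by simp
  also have "\<dots> = (\<Sum>a\<in>ks p. \<Sum>b\<in>ks q. sg (a + b) (lk p a * lk q b))"
    by (simp add: sum_product mult_single)
  finally show ?thesis .
qed

lemma lm_mult:
  assumes "p \<noteq> 0" "q \<noteq> 0"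
  shows "lm (p * q) = lm p + lm q" "lc (p * q) = lc p * lc q"
proof -
  let ?A = "lm p" and ?B = "lm q"
  have inner: "(\<Sum>b\<in>ks q. lk p a * lk q b when a + b = ?A + ?B) = (lk p ?A * lk q ?B when a = ?A)"
    if a: "a \<in> ks p" for a
  proof (cases "a = ?A")
    case True
    have "(\<Sum>b\<in>ks q. lk p a * lk q b when a + b = ?A + ?B) = (\<Sum>b\<in>ks q. if b = ?B then lk p a * lk q b else 0)"
      by (rule sum.cong) (auto simp: when_def True)
    also have "\<dots> = lk p a * lk q ?B"
      using lm_in[OF assms(2)] by simp
    finally show ?thesis using True by simp
  next
    case False
    have "a < ?A" using lm_ge[OF a] False by simp
    have "(\<Sum>b\<in>ks q. lk p a * lk q b when a + b = ?A + ?B) = (\<Sum>b\<in>ks q. 0)"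
    proof (rule sum.cong)
      fix b assume "b \<in> ks q"
      then have "b \<le> ?B" by (rule lm_ge)
      then have "a + b < ?A + ?B" using \<open>a < ?A\<close> by (rule add_less_le_mono[rotated])
      then show "(lk p a * lk q b when a + b = ?A + ?B) = 0" by simp
    qed simp
    then show ?thesis using False by simp
  qed
  have lk_top: "lk (p * q) (?A + ?B) = lk p ?A * lk q ?B"
  proof -
    have "lk (p * q) (?A + ?B) = (\<Sum>a\<in>ks p. \<Sum>b\<in>ks q. lk p a * lk q b when a + b = ?A + ?B)"
      by (subst mult_expansion) (simp add: lookup_sum lookup_single)
    also have "\<dots> = (\<Sum>a\<in>ks p. lk p ?A * lk q ?B when a = ?A)"
      by (rule sum.cong) (auto simp: inner)
    also have "\<dots> = lk p ?A * lk q ?B"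
      using lm_in[OF assms(1)] by (simp add: when_def)
    finally show ?thesis .
  qed
  have nz: "lk p ?A * lk q ?B \<noteq> 0"
    using lc_nz[OF assms(1)] lc_nz[OF assms(2)] by (simp add: lc_def)
  have "lm (p * q) = ?A + ?B"
  proof (rule lm_eqI)
    show "?A + ?B \<in> ks (p * q)" using lk_top nz by (simp add: in_keys_iff)
    fix m assume "m \<in> ks (p * q)"
    then have "m \<in> {a + b | a b. a \<in> ks p \<and> b \<in> ks q}" by (rule subsetD[OF keys_mult])
    then obtain a b where "m = a + b" "a \<in> ks p" "b \<in> ks q" by auto
    then have "a \<le> ?A" "b \<le> ?B" using lm_ge by auto
    then show "m \<le> ?A + ?B" using \<open>m = a + b\<close> by (simp add: add_mono)
  qed
  then show "lm (p * q) = lm p + lm q" .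
  then show "lc (p * q) = lc p * lc q" using lk_top by (simp add: lc_def)
qed

lemma keys_le_lm: "m \<in> ks p \<Longrightarrow> m \<le> lm p" by (rule lm_ge)

lemma lm_diff:
  assumes "p \<noteq> 0" "q = 0 \<or> lm q < lm p"
  shows "p - q \<noteq> 0" "lm (p - q) = lm p" "lc (p - q) = lc p"
proof -
  have "lm p \<notin> ks q" using assms(2) lm_ge by (auto simp: not_le[symmetric])
  then have l: "lk (p - q) (lm p) = lc p" by (simp add: lookup_minus lc_def in_keys_iff)
  then have ink: "lm p \<in> ks (p - q)" using lc_nz[OF assms(1)] by (simp add: in_keys_iff)
  then show "p - q \<noteq> 0" by auto
  have "lm (p - q) = lm p"
  proof (rule lm_eqI[OF ink])
    fix m assume "m \<in> ks (p - q)"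
    then have "m \<in> ks p \<union> ks q" by (rule subsetD[OF keys_diff])
    then have "m \<in> ks p \<or> m \<in> ks q" by simp
    then show "m \<le> lm p" using assms(2) lm_ge[of m p] lm_ge[of m q] by auto
  qed
  then show "lm (p - q) = lm p" .
  then show "lc (p - q) = lc p" using l by (simp add: lc_def)
qed

lemma lm_PVar[simp]: "lm (PVar x) = sg x 1"
  by (rule lm_eqI) (auto simp: PVar_def)

lemma lc_PVar[simp]: "lc (PVar x) = 1"
proof -
  have "lk (PVar x) (sg x 1) = 1" by (simp add: PVar_def)
  then show ?thesis by (simp add: lc_def)
qed

lemma PVar_nz[simp]: "PVar x \<noteq> 0"
proof
  assume "PVar x = 0"
  then have "lk (PVar x) (sg x 1) = 0" by simp
  then show False by (simp add: PVar_def)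
qed

lemma mono_less_iff: "(A::var \<Rightarrow>\<^sub>0 nat) < B \<longleftrightarrow> (\<exists>k. lk A k < lk B k \<and> (\<forall>k'<k. lk A k' = lk B k'))"
  by (simp add: less_poly_mapping.rep_eq less_fun_def)

lemma single_less: "(x::var) < y \<Longrightarrow> sg y (1::nat) < sg x 1"
  unfolding mono_less_iff
proof (intro exI conjI allI impI)
  assume "x < y"
  then show "lk (sg y 1) x < lk (sg x (1::nat)) x" by (simp add: lookup_single)
  fix k' assume "k' < x"
  then show "lk (sg y 1) k' = lk (sg x (1::nat)) k'" using \<open>x < y\<close> by (simp add: lookup_single)
qed


definition Vpoly :: "var set \<Rightarrow> cpoly set" where
  "Vpoly K = {p. \<forall>m\<in>ks p. ks m \<subseteq> K}"

lemma Vpoly_0[simp]: "0 \<in> Vpoly K" by (simp add: Vpoly_def)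
lemma Vpoly_const[simp]: "PConst c \<in> Vpoly K" by (simp add: Vpoly_def PConst_def)
lemma Vpoly_var: "v \<in> K \<Longrightarrow> PVar v \<in> Vpoly K" by (simp add: Vpoly_def PVar_def)
lemma Vpoly_add: "p \<in> Vpoly K \<Longrightarrow> q \<in> Vpoly K \<Longrightarrow> p + q \<in> Vpoly K"
proof (unfold Vpoly_def, safe)
  fix m x assume "\<forall>m\<in>ks p. ks m \<subseteq> K" "\<forall>m\<in>ks q. ks m \<subseteq> K" "m \<in> ks (p + q)" "x \<in> ks m"
  moreover have "m \<in> ks p \<union> ks q" by (rule subsetD[OF keys_add \<open>m \<in> ks (p+q)\<close>])
  ultimately show "x \<in> K" by auto
qed
lemma Vpoly_uminus: "p \<in> Vpoly K \<Longrightarrow> - p \<in> Vpoly K" by (simp add: Vpoly_def)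
lemma Vpoly_diff: "p \<in> Vpoly K \<Longrightarrow> q \<in> Vpoly K \<Longrightarrow> p - q \<in> Vpoly K"
  using Vpoly_add[of p K "-q"] Vpoly_uminus[of q K] by simp
lemma Vpoly_mult: "p \<in> Vpoly K \<Longrightarrow> q \<in> Vpoly K \<Longrightarrow> p * q \<in> Vpoly K"
proof (unfold Vpoly_def, safe)
  fix m x assume p: "\<forall>m\<in>ks p. ks m \<subseteq> K" and q: "\<forall>m\<in>ks q. ks m \<subseteq> K" and "m \<in> ks (p * q)" "x \<in> ks m"
  have "m \<in> {a + b | a b. a \<in> ks p \<and> b \<in> ks q}" by (rule subsetD[OF keys_mult \<open>m \<in> ks (p*q)\<close>])
  then obtain a b where ab: "m = a + b" "a \<in> ks p" "b \<in> ks q" by auto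
  have "x \<in> ks (a + b)" using \<open>x \<in> ks m\<close> ab(1) by simp
  then have "x \<in> ks a \<union> ks b" by (rule subsetD[OF keys_add])
  then show "x \<in> K" using p q ab(2,3) by auto
qed
lemma Vpoly_sum: "(\<And>a. a \<in> A \<Longrightarrow> f a \<in> Vpoly K) \<Longrightarrow> sum f A \<in> Vpoly K"
  by (induction A rule: infinite_finite_induct) (auto intro: Vpoly_add)
lemma Vpoly_one[simp]: "1 \<in> Vpoly K" using Vpoly_const[of 1 K] by simp
lemma Vpoly_prod: "(\<And>a. a \<in> A \<Longrightarrow> f a \<in> Vpoly K) \<Longrightarrow> prod f A \<in> Vpoly K"
  by (induction A rule: infinite_finite_induct) (auto intro: Vpoly_mult)
lemma Vpoly_power: "p \<in> Vpoly K \<Longrightarrow> p ^ k \<in> Vpoly K"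
  by (induction k) (auto intro: Vpoly_mult)

lemma Vpoly_evp:
  assumes "p \<in> Vpoly K" "\<And>v. v \<in> K \<Longrightarrow> \<sigma> v \<in> Vpoly K'"
  shows "evp \<sigma> p \<in> Vpoly K'"
  unfolding evp_def monom_def
proof (intro Vpoly_sum Vpoly_mult Vpoly_const Vpoly_prod Vpoly_power)
  fix m v assume "m \<in> ks p" "v \<in> ks m"
  then have "v \<in> K" using assms(1) by (auto simp: Vpoly_def)
  then show "\<sigma> v \<in> Vpoly K'" by (rule assms(2))
qed

lemma Vpoly_lm: "p \<in> Vpoly K \<Longrightarrow> p \<noteq> 0 \<Longrightarrow> ks (lm p) \<subseteq> K"
  using lm_in by (auto simp: Vpoly_def)

subsection \<open>Well-foundedness of the monomial order on finitely many variables\<close>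

definition restr :: "var \<Rightarrow> (var \<Rightarrow>\<^sub>0 nat) \<Rightarrow> (var \<Rightarrow>\<^sub>0 nat)" where
  "restr b \<mu> = Poly_Mapping.update b 0 \<mu>"

lemma wf_mono_rel:
  assumes "finite K"
  shows "wf {(\<mu>::var \<Rightarrow>\<^sub>0 nat, \<nu>). ks \<mu> \<subseteq> K \<and> ks \<nu> \<subseteq> K \<and> \<mu> < \<nu>}"
  using assms
proof (induction K rule: finite_linorder_min_induct)
  case empty
  show ?case by (rule wfI_pf) auto
next
  case (insert b K)
  let ?R = "{(\<mu>::var \<Rightarrow>\<^sub>0 nat, \<nu>). ks \<mu> \<subseteq> K \<and> ks \<nu> \<subseteq> K \<and> \<mu> < \<nu>}"
  let ?f = "\<lambda>\<mu>::var \<Rightarrow>\<^sub>0 nat. (lk \<mu> b, restr b \<mu>)"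
  have wf: "wf (inv_image (less_than <*lex*> ?R) ?f)"
    by (intro wf_inv_image wf_lex_prod wf_less_than insert.IH)
  show ?case
  proof (rule wf_subset[OF wf], safe)
    fix \<mu> \<nu> :: "var \<Rightarrow>\<^sub>0 nat"
    assume km: "ks \<mu> \<subseteq> insert b K" and kn: "ks \<nu> \<subseteq> insert b K" and lt: "\<mu> < \<nu>"
    have kr: "ks (restr b \<xi>) \<subseteq> K" if "ks \<xi> \<subseteq> insert b K" for \<xi>
      using that by (auto simp: restr_def keys_update)
    from lt obtain k where k: "lk \<mu> k < lk \<nu> k" "\<forall>k'<k. lk \<mu> k' = lk \<nu> k'"
      unfolding mono_less_iff by (elim exE conjE) (rule that)
    have "k \<in> ks \<nu>" using k(1) by (auto simp: in_keys_iff)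
    then have kin: "k \<in> insert b K" by (rule subsetD[OF kn])
    show "(\<mu>, \<nu>) \<in> inv_image (less_than <*lex*> ?R) ?f"
    proof (cases "k = b")
      case True
      then show ?thesis using k by simp
    next
      case False
      then have "b < k" using kin insert.hyps(2) by auto
      then have eqb: "lk \<mu> b = lk \<nu> b" using k(2) by (elim allE[of _ b]) simp
      have "restr b \<mu> < restr b \<nu>"
        unfolding mono_less_iff
      proof (intro exI[of _ k] conjI allI impI)
        show "lk (restr b \<mu>) k < lk (restr b \<nu>) k" using k(1) False by (simp add: restr_def lookup_update)
        fix k' assume "k' < k"
        then have "lk \<mu> k' = lk \<nu> k'" using k(2) by (elim allE[of _ k']) simp
        then show "lk (restr b \<mu>) k' = lk (restr b \<nu>) k'" by (simp add: restr_def lookup_update)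
      qed
      then show ?thesis using eqb kr[OF km] kr[OF kn] by simp
    qed
  qed
qed

lemma lm_add_small:
  assumes "p \<noteq> 0" "\<And>k. k \<in> ks q \<Longrightarrow> k < lm p"
  shows "p + q \<noteq> 0" "lm (p + q) = lm p" "lc (p + q) = lc p"
proof -
  have "lm p \<notin> ks q" using assms(2)[of "lm p"] by auto
  then have l: "lk (p + q) (lm p) = lc p" by (simp add: lookup_add lc_def in_keys_iff)
  then have ink: "lm p \<in> ks (p + q)" using lc_nz[OF assms(1)] by (simp add: in_keys_iff)
  then show "p + q \<noteq> 0" by auto
  have "lm (p + q) = lm p"
  proof (rule lm_eqI[OF ink])
    fix m assume "m \<in> ks (p + q)"
    then have "m \<in> ks p \<union> ks q" by (rule subsetD[OF keys_add])
    then show "m \<le> lm p" using assms(2)[of m] lm_ge[of m p] by auto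
  qed
  then show "lm (p + q) = lm p" .
  then show "lc (p + q) = lc p" using l by (simp add: lc_def)
qed

lemma lm_uminus[simp]: "lm (- p) = lm p" by (simp add: lm_def)
lemma lc_uminus[simp]: "lc (- p) = - lc p" by (simp add: lc_def)

lemma lm_diff_big:
  assumes "q \<noteq> 0" "p = 0 \<or> lm p < lm q"
  shows "p - q \<noteq> 0" "lm (p - q) = lm q"
proof -
  have "q - p \<noteq> 0" "lm (q - p) = lm q" using lm_diff[OF assms] by auto
  moreover have "p - q = - (q - p)" by simp
  ultimately show "p - q \<noteq> 0" "lm (p - q) = lm q" by (metis neg_equal_0_iff_equal, metis lm_uminus)
qed

lemma lm_cancel:
  assumes "p \<noteq> 0" "r \<noteq> 0" "lm p = lm r" "lc p = lc r" "p - r \<noteq> 0"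
  shows "lm (p - r) < lm p"
proof -
  have "lm (p - r) \<in> ks (p - r)" using lm_in[OF assms(5)] .
  then have "lm (p - r) \<in> ks p \<union> ks r" by (rule subsetD[OF keys_diff])
  then have le: "lm (p - r) \<le> lm p" using lm_ge[of "lm (p - r)" p] lm_ge[of "lm (p - r)" r] assms(3) by auto
  have "lk (p - r) (lm p) = 0" using assms(3,4) by (simp add: lookup_minus lc_def)
  then have "lm (p - r) \<noteq> lm p" using \<open>lm (p - r) \<in> ks (p - r)\<close> by (auto simp: in_keys_iff)
  then show ?thesis using le by simp
qed

lemma lm_PConst_mult:
  assumes "c \<noteq> 0" "p \<noteq> 0"
  shows "PConst c * p \<noteq> 0" "lm (PConst c * p) = lm p" "lc (PConst c * p) = c * lc p"
proof -
  have cnz: "PConst c \<noteq> 0" using assms(1) by (metis PConst_def lookup_single_eq lookup_zero)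
  have lmc: "lm (PConst c) = 0" by (rule lm_eqI) (auto simp: PConst_def assms(1))
  have "lk (PConst c) 0 = c" by (simp add: PConst_def)
  then have lcc: "lc (PConst c) = c" using lmc by (simp add: lc_def)
  show "PConst c * p \<noteq> 0" using cnz assms(2) by simp
  show "lm (PConst c * p) = lm p" using lm_mult[OF cnz assms(2)] lmc by simp
  show "lc (PConst c * p) = c * lc p" using lm_mult[OF cnz assms(2)] lcc by simp
qed

lemma lm_one[simp]: "lm 1 = 0"
  by (rule lm_eqI) auto

lemma lm_power:
  assumes "p \<noteq> 0"
  shows "p ^ e \<noteq> 0 \<and> lk (lm (p ^ e)) x = e * lk (lm p) x"
proof (induction e)
  case 0
  then show ?case by simp
next
  case (Suc e)
  then have "p ^ Suc e = p * p ^ e" "p * p ^ e \<noteq> 0" using assms by auto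
  moreover have "lm (p * p ^ e) = lm p + lm (p ^ e)" using lm_mult(1)[OF assms] Suc by simp
  ultimately show ?case using Suc by (simp add: lookup_add)
qed

lemma lm_prod_pow:
  assumes "finite F" "\<And>v. v \<in> F \<Longrightarrow> p v \<noteq> 0"
  shows "(\<Prod>v\<in>F. p v ^ e v) \<noteq> 0 \<and> lk (lm (\<Prod>v\<in>F. p v ^ e v)) x = (\<Sum>v\<in>F. e v * lk (lm (p v)) x)"
  using assms
proof (induction F rule: finite_induct)
  case empty
  then show ?case by simp
next
  case (insert a F)
  have pa: "p a ^ e a \<noteq> 0" "lk (lm (p a ^ e a)) x = e a * lk (lm (p a)) x"
    using lm_power[of "p a" "e a" x] insert.prems by auto
  have IH: "(\<Prod>v\<in>F. p v ^ e v) \<noteq> 0" "lk (lm (\<Prod>v\<in>F. p v ^ e v)) x = (\<Sum>v\<in>F. e v * lk (lm (p v)) x)"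
    using insert by auto
  have e1: "(\<Prod>v\<in>insert a F. p v ^ e v) = p a ^ e a * (\<Prod>v\<in>F. p v ^ e v)"
    by (rule prod.insert[OF insert.hyps])
  have e2: "lm (p a ^ e a * (\<Prod>v\<in>F. p v ^ e v)) = lm (p a ^ e a) + lm (\<Prod>v\<in>F. p v ^ e v)"
    by (rule lm_mult(1)[OF pa(1) IH(1)])
  have "lk (lm (\<Prod>v\<in>insert a F. p v ^ e v)) x = e a * lk (lm (p a)) x + (\<Sum>v\<in>F. e v * lk (lm (p v)) x)"
    by (simp only: e1 e2 lookup_add pa(2) IH(2))
  also have "\<dots> = (\<Sum>v\<in>insert a F. e v * lk (lm (p v)) x)"
    by (rule sum.insert[symmetric, OF insert.hyps])
  finally have l: "lk (lm (\<Prod>v\<in>insert a F. p v ^ e v)) x = (\<Sum>v\<in>insert a F. e v * lk (lm (p v)) x)" .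
  have "(\<Prod>v\<in>insert a F. p v ^ e v) \<noteq> 0" unfolding e1 using pa(1) IH(1) by simp
  then show ?case using l by (intro conjI)
qed

lemma lm_sum_distinct:
  fixes X :: "(var \<Rightarrow>\<^sub>0 nat) \<Rightarrow> cpoly"
  assumes "finite F" "F \<noteq> {}" "\<And>m. m \<in> F \<Longrightarrow> c m \<noteq> 0" "\<And>m. m \<in> F \<Longrightarrow> X m \<noteq> 0"
    "inj_on (\<lambda>m. lm (X m)) F"
  shows "(\<Sum>m\<in>F. PConst (c m) * X m) \<noteq> 0 \<and> (\<exists>m\<in>F. lm (\<Sum>m\<in>F. PConst (c m) * X m) = lm (X m))"
proof -
  let ?L = "\<lambda>m. lm (X m)"
  have "Max (?L ` F) \<in> ?L ` F" using assms(1,2) by (intro Max_in) auto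
  then obtain ms where ms: "ms \<in> F" "?L ms = Max (?L ` F)" by auto
  have less: "?L m < ?L ms" if "m \<in> F" "m \<noteq> ms" for m
  proof -
    have "?L m \<le> ?L ms" using ms assms(1) that(1) by (simp add: Max_ge)
    moreover have "?L m \<noteq> ?L ms" using assms(5) that ms(1) by (auto dest: inj_onD)
    ultimately show ?thesis by simp
  qed
  have sp: "(\<Sum>m\<in>F. PConst (c m) * X m) = PConst (c ms) * X ms + (\<Sum>m\<in>F - {ms}. PConst (c m) * X m)"
    using assms(1) ms(1) by (simp add: sum.remove)
  have Y: "PConst (c ms) * X ms \<noteq> 0" "lm (PConst (c ms) * X ms) = ?L ms"
    using lm_PConst_mult[OF assms(3)[OF ms(1)] assms(4)[OF ms(1)]] by auto
  have small: "k < lm (PConst (c ms) * X ms)" if "k \<in> ks (\<Sum>m\<in>F - {ms}. PConst (c m) * X m)" for k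
  proof -
    have "k \<in> (\<Union>m\<in>F - {ms}. ks (PConst (c m) * X m))" using subsetD[OF keys_sum that] .
    then obtain m where m: "m \<in> F" "m \<noteq> ms" "k \<in> ks (PConst (c m) * X m)" by auto
    have "k \<le> lm (PConst (c m) * X m)" using m(3) by (rule lm_ge)
    also have "\<dots> = ?L m" using lm_PConst_mult[OF assms(3)[OF m(1)] assms(4)[OF m(1)]] by simp
    also have "\<dots> < ?L ms" using less m by simp
    finally show ?thesis using Y by simp
  qed
  have "(\<Sum>m\<in>F. PConst (c m) * X m) \<noteq> 0" using lm_add_small(1)[OF Y(1) small] sp by simp
  moreover have "lm (\<Sum>m\<in>F. PConst (c m) * X m) = lm (X ms)" using lm_add_small(2)[OF Y(1) small] sp Y(2) by simp
  ultimately show ?thesis using ms(1) by (intro conjI bexI)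
qed


lemma Cab_Vpoly: "Cab n = Vpoly ({1,2} \<times> {..<n})"
  by (simp add: Cab_def Vpoly_def)

lemma avar_mod: "x mod int n = y mod int n \<Longrightarrow> avar n x = avar n y"
  by (simp add: avar_def)
lemma bvar_mod: "x mod int n = y mod int n \<Longrightarrow> bvar n x = bvar n y"
  by (simp add: bvar_def)

lemma modL1: "(a + (x - a) mod (m::int)) mod m = x mod m"
  by (simp add: mod_add_right_eq)

lemma modL2: "(a + (x - a) mod (m::int) - 1) mod m = (x - 1) mod m"
proof -
  have "(a + (x - a) mod m - 1) mod m = ((x - a) mod m + (a - 1)) mod m" by (simp add: algebra_simps)
  also have "\<dots> = ((x - a) + (a - 1)) mod m" by (simp add: mod_add_left_eq)
  finally show ?thesis by simp
qed

locale lsetup =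
  fixes n i :: nat
  assumes npos: "0 < n"
begin

definition kB :: "nat \<Rightarrow> var" where
  "kB r = (if even r \<and> r + 2 \<le> n then (0, r) else (2, r))"

definition rel :: "int \<Rightarrow> nat" where "rel x = nat ((x - int i) mod int n)"

definition sth :: "var \<Rightarrow> cpoly" where
  "sth v = (if fst v = 1 \<and> snd v < n then PVar (1, rel (int (snd v))) - PVar (kB (rel (int (snd v) - 1)))
            else if fst v = 2 \<and> snd v < n then PVar (kB (rel (int (snd v))))
            else PVar (fst v + 3, snd v))"

definition sthi :: "var \<Rightarrow> cpoly" where
  "sthi v = (if fst v \<ge> 3 then PVar (fst v - 3, snd v)
             else if fst v = 1 \<and> snd v < n then avar n (int i + int (snd v)) + bvar n (int i + int (snd v) - 1)
             else if (fst v = 0 \<and> even (snd v) \<and> snd v + 2 \<le> n) \<or> (fst v = 2 \<and> snd v < n \<and> \<not> (even (snd v) \<and> snd v + 2 \<le> n))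
               then bvar n (int i + int (snd v)) else 0)"

definition th :: "cpoly \<Rightarrow> cpoly" where "th p = evp sth p"

lemma rel_lt: "rel x < n"
  unfolding rel_def using npos by (simp add: nat_less_iff)

lemma int_rel: "int (rel x) = (x - int i) mod int n"
  unfolding rel_def using npos by simp

lemma sthi_kB: "t < n \<Longrightarrow> sthi (kB t) = bvar n (int i + int t)"
  unfolding kB_def sthi_def by auto

lemma sthi_1: "t < n \<Longrightarrow> sthi (1, t) = avar n (int i + int t) + bvar n (int i + int t - 1)"
  unfolding sthi_def by auto

lemma thi_th_var: "evp sthi (sth v) = PVar v"
proof -
  obtain s k where v: "v = (s, k)" by fastforce
  show ?thesis
  proof (cases "s = 1 \<and> k < n")
    case True
    have "evp sthi (sth v) = sthi (1, rel (int k)) - sthi (kB (rel (int k - 1)))"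
      using True by (simp add: v sth_def evp_diff)
    also have "\<dots> = avar n (int i + int (rel (int k))) + bvar n (int i + int (rel (int k)) - 1)
                    - bvar n (int i + int (rel (int k - 1)))"
      by (simp only: sthi_kB[OF rel_lt] sthi_1[OF rel_lt])
    also have "avar n (int i + int (rel (int k))) = avar n (int k)"
      by (rule avar_mod) (simp only: int_rel modL1)
    also have "bvar n (int i + int (rel (int k)) - 1) = bvar n (int i + int (rel (int k - 1)))"
      by (rule bvar_mod) (simp only: int_rel modL1 modL2)
    also have "avar n (int k) = PVar v"
      using True npos by (simp add: avar_def v)
    finally show ?thesis by simp
  next
    case F1: False
    show ?thesis
    proof (cases "s = 2 \<and> k < n")
      case True
      have "evp sthi (sth v) = bvar n (int i + int (rel (int k)))"
        using True by (simp add: v sth_def sthi_kB[OF rel_lt])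
      also have "\<dots> = bvar n (int k)"
        by (rule bvar_mod) (simp only: int_rel modL1)
      also have "\<dots> = PVar v" using True npos by (simp add: bvar_def v)
      finally show ?thesis .
    next
      case False
      then have "sth v = PVar (s + 3, k)" using F1 by (auto simp: v sth_def)
      moreover have "sthi (s + 3, k) = PVar v" by (simp add: sthi_def v)
      ultimately show ?thesis by simp
    qed
  qed
qed

lemma thi_th: "evp sthi (th p) = p"
  unfolding th_def evp_evp by (simp add: thi_th_var evp_PVar)

lemma th_inj: "th p = 0 \<Longrightarrow> p = 0"
  using thi_th[of p] by simp

lemma th_add: "th (p + q) = th p + th q" by (simp add: th_def evp_add)
lemma th_diff: "th (p - q) = th p - th q" by (simp add: th_def evp_diff)
lemma th_mult: "th (p * q) = th p * th q" by (simp add: th_def evp_mult)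
lemma th_const[simp]: "th (PConst c) = PConst c" by (simp add: th_def)
lemma th_one[simp]: "th 1 = 1" by (simp add: th_def)

lemma th_avar: "th (avar n x) = PVar (1, rel x) - PVar (kB (rel (x - 1)))"
proof -
  have k: "nat (x mod int n) < n" using npos by (simp add: nat_less_iff)
  have r1: "rel (int (nat (x mod int n))) = rel x"
    using npos by (simp add: rel_def mod_diff_left_eq)
  have r2: "rel (int (nat (x mod int n)) - 1) = rel (x - 1)"
    using npos by (simp add: rel_def mod_diff_left_eq algebra_simps)
  show ?thesis using k r1 r2 by (simp add: th_def avar_def sth_def)
qed

lemma th_bvar: "th (bvar n x) = PVar (kB (rel x))"
proof -
  have k: "nat (x mod int n) < n" using npos by (simp add: nat_less_iff)
  have r1: "rel (int (nat (x mod int n))) = rel x"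
    using npos by (simp add: rel_def mod_diff_left_eq)
  show ?thesis using k r1 by (simp add: th_def bvar_def sth_def)
qed

lemma th_Vpoly: "p \<in> Cab n \<Longrightarrow> th p \<in> Vpoly ({0,1,2} \<times> {..<n})"
  unfolding th_def Cab_Vpoly
proof (rule Vpoly_evp)
  fix v :: var assume "v \<in> {1,2} \<times> {..<n}"
  then show "sth v \<in> Vpoly ({0,1,2} \<times> {..<n})"
    using rel_lt by (auto simp: sth_def kB_def intro!: Vpoly_diff Vpoly_var)
qed

end


context lsetup begin

definition Ar :: "nat \<Rightarrow> cpoly" where "Ar r = avar n (int i + int r)"
definition Br :: "nat \<Rightarrow> cpoly" where "Br r = bvar n (int i + int r)"
definition Ur :: "nat \<Rightarrow> cpoly" where "Ur r = avar n (int i + int r) + bvar n (int i + int r - 1)"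
definition Vr :: "nat \<Rightarrow> cpoly" where "Vr r = avar n (int i + int r) * bvar n (int i + int r)"
definition sG :: "var \<Rightarrow> cpoly" where
  "sG v = (if fst v = 1 then Ur (snd v) else if fst v = 2 then Vr (snd v) else 0)"

abbreviation Cv :: "var set" where "Cv \<equiv> {1,2} \<times> {..<n}"

lemma rel_ir: "r < n \<Longrightarrow> rel (int i + int r) = r"
  by (simp add: rel_def)

lemma rel_ir1: "rel (int i + int r - 1) = nat ((int r - 1) mod int n)"
  by (simp add: rel_def algebra_simps)

lemma th_U: "r < n \<Longrightarrow> th (Ur r) = PVar (1, r)"
  by (simp add: Ur_def th_add th_avar th_bvar rel_ir algebra_simps)

lemma th_V: "r < n \<Longrightarrow> th (Vr r) = (PVar (1, r) - PVar (kB (nat ((int r - 1) mod int n)))) * PVar (kB r)"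
  by (simp add: Vr_def th_mult th_avar th_bvar rel_ir rel_ir1 algebra_simps)

definition lV :: "nat \<Rightarrow> (var \<Rightarrow>\<^sub>0 nat)" where
  "lV r = (if odd r then sg (0, r - 1) 1 else sg (1, r) 1) + sg (kB r) 1"

lemma lm_thV: assumes "r < n" shows "th (Vr r) \<noteq> 0" "lm (th (Vr r)) = lV r"
proof -
  let ?t = "nat ((int r - 1) mod int n)"
  have D: "PVar (1, r) - PVar (kB ?t) \<noteq> 0 \<and> lm (PVar (1, r) - PVar (kB ?t)) = (if odd r then sg (0, r - 1) 1 else sg (1, r) 1)"
  proof (cases "odd r")
    case True
    then have r1: "r \<ge> 1" by (cases r) auto
    have "(int r - 1) mod int n = int r - 1" using r1 assms by (intro mod_pos_pos_trivial) auto
    then have t: "?t = r - 1" using r1 by simp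
    have kb: "kB (r - 1) = (0, r - 1)" using True r1 assms by (auto simp: kB_def)
    have lt: "lm (PVar (1, r)) < lm (PVar (0, r - 1))" unfolding lm_PVar by (rule single_less) simp
    show ?thesis using lm_diff_big[OF PVar_nz, of "PVar (1, r)" "(0, r - 1)"] lt t kb True by simp
  next
    case False
    have "fst (kB ?t) = 2"
    proof (cases "r = 0")
      case True
      have "(int r - 1) mod int n = int n - 1" using True assms
        by (simp add: zmod_minus1)
      then have "?t = n - 1" using assms by simp
      then show ?thesis using assms by (simp add: kB_def)
    next
      case r0: False
      have "(int r - 1) mod int n = int r - 1" using r0 assms by (intro mod_pos_pos_trivial) auto
      then have "?t = r - 1" using r0 by simp
      then show ?thesis using False r0 by (auto simp: kB_def)
    qed
    then obtain t' where kb: "kB ?t = (2, t')" by (metis prod.collapse)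
    have lt: "lm (PVar (kB ?t)) < lm (PVar (1, r))" unfolding kb lm_PVar by (rule single_less) simp
    show ?thesis using lm_diff[OF PVar_nz, of "PVar (kB ?t)" "(1, r)"] lt False by simp
  qed
  have e: "th (Vr r) = (PVar (1, r) - PVar (kB ?t)) * PVar (kB r)" by (rule th_V[OF assms])
  show "th (Vr r) \<noteq> 0" using D e by simp
  show "lm (th (Vr r)) = lV r" using D e lm_mult(1)[of "PVar (1, r) - PVar (kB ?t)" "PVar (kB r)"]
    by (simp add: lV_def)
qed

lemma ex_j: "\<exists>j. j \<in> {1..n} \<and> int j mod int n = x mod int n"
proof (intro exI conjI)
  let ?j = "nat ((x - 1) mod int n) + 1"
  have e: "int ?j = (x - 1) mod int n + 1" using npos by simp
  have "int ?j mod int n = ((x - 1) mod int n + 1) mod int n" by (simp only: e)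
  also have "\<dots> = (x - 1 + 1) mod int n" by (rule mod_add_left_eq)
  finally show "int ?j mod int n = x mod int n" by simp
  have "(x - 1) mod int n < int n" using npos by simp
  then have "nat ((x - 1) mod int n) < n" using npos by (simp add: nat_less_iff)
  then show "?j \<in> {1..n}" by simp
qed

lemma mod_minus1_cong: "a mod (m::int) = b mod m \<Longrightarrow> (a - 1) mod m = (b - 1) mod m"
  by (metis mod_diff_left_eq)

lemma Ur_LSym: "Ur r \<in> LSym n"
proof -
  obtain j where j: "j \<in> {1..n}" "int j mod int n = (int i + int r) mod int n" using ex_j by blast
  have "avar n (int j) + bvar n (int j - 1) \<in> LSym n" using j(1) by (rule LSym.gen1)
  moreover have "avar n (int j) = avar n (int i + int r)" by (rule avar_mod[OF j(2)])
  moreover have "bvar n (int j - 1) = bvar n (int i + int r - 1)" by (rule bvar_mod[OF mod_minus1_cong[OF j(2)]])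
  ultimately show ?thesis by (simp add: Ur_def)
qed

lemma Vr_LSym: "Vr r \<in> LSym n"
proof -
  obtain j where j: "j \<in> {1..n}" "int j mod int n = (int i + int r) mod int n" using ex_j by blast
  have "avar n (int j) * bvar n (int j) \<in> LSym n" using j(1) by (rule LSym.gen2)
  moreover have "avar n (int j) = avar n (int i + int r)" by (rule avar_mod[OF j(2)])
  moreover have "bvar n (int j) = bvar n (int i + int r)" by (rule bvar_mod[OF j(2)])
  ultimately show ?thesis by (simp add: Vr_def)
qed

lemma LSym_one: "1 \<in> LSym n" using LSym.const[of 1 n] by simp
lemma LSym_smult: "p \<in> LSym n \<Longrightarrow> PConst c * p \<in> LSym n" by (intro LSym.mult LSym.const)
lemma LSym_diff: "p \<in> LSym n \<Longrightarrow> q \<in> LSym n \<Longrightarrow> p - q \<in> LSym n"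
proof -
  assume "p \<in> LSym n" "q \<in> LSym n"
  then have "p + PConst (-1) * q \<in> LSym n" by (intro LSym.add LSym_smult)
  moreover have "PConst (-1) = - 1" by (simp add: PConst_def single_uminus)
  ultimately show ?thesis by simp
qed
lemma LSym_power: "p \<in> LSym n \<Longrightarrow> p ^ k \<in> LSym n"
  by (induction k) (auto intro: LSym_one LSym.mult)
lemma LSym_prod: "(\<And>a. a \<in> S \<Longrightarrow> f a \<in> LSym n) \<Longrightarrow> prod f S \<in> LSym n"
  by (induction S rule: infinite_finite_induct) (auto intro: LSym_one LSym.mult)

lemma sG_LSym: "v \<in> Cv \<Longrightarrow> sG v \<in> LSym n"
  by (auto simp: sG_def Ur_LSym Vr_LSym)

lemma monom_LSym: "ks m \<subseteq> Cv \<Longrightarrow> monom sG m \<in> LSym n"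
  unfolding monom_def by (intro LSym_prod LSym_power sG_LSym) auto

lemma avar_Cab: "avar n x \<in> Cab n"
  unfolding avar_def Cab_Vpoly using npos by (intro Vpoly_var) (auto simp: nat_less_iff)
lemma bvar_Cab: "bvar n x \<in> Cab n"
  unfolding bvar_def Cab_Vpoly using npos by (intro Vpoly_var) (auto simp: nat_less_iff)

lemma LSym_Cab: "g \<in> LSym n \<Longrightarrow> g \<in> Cab n"
  unfolding Cab_Vpoly[symmetric]
proof (induction rule: LSym.induct)
  case (const c) then show ?case by (simp add: Cab_Vpoly)
next
  case (gen1 j) then show ?case using avar_Cab bvar_Cab by (simp add: Cab_Vpoly Vpoly_add)
next
  case (gen2 j) then show ?case using avar_Cab bvar_Cab by (simp add: Cab_Vpoly Vpoly_mult)
next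
  case (add p q) then show ?case by (simp add: Cab_Vpoly Vpoly_add)
next
  case (mult p q) then show ?case by (simp add: Cab_Vpoly Vpoly_mult)
qed

lemma monom_Cab: "ks m \<subseteq> Cv \<Longrightarrow> monom sG m \<in> Cab n"
  using monom_LSym LSym_Cab by blast

lemma LSym_repr: "g \<in> LSym n \<Longrightarrow> \<exists>P. P \<in> Cab n \<and> g = evp sG P"
proof (induction rule: LSym.induct)
  case (const c)
  then show ?case by (intro exI[of _ "PConst c"]) (simp add: Cab_Vpoly)
next
  case (gen1 j)
  let ?r = "rel (int j)"
  have "Ur ?r = avar n (int j) + bvar n (int j - 1)"
    unfolding Ur_def
    by (intro arg_cong2[where f = "(+)"] avar_mod bvar_mod) (simp_all only: int_rel modL1 modL2)
  moreover have "PVar (1, ?r) \<in> Cab n" unfolding Cab_Vpoly using rel_lt by (intro Vpoly_var) auto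
  ultimately show ?case by (intro exI[of _ "PVar (1, ?r)"]) (simp add: sG_def)
next
  case (gen2 j)
  let ?r = "rel (int j)"
  have "Vr ?r = avar n (int j) * bvar n (int j)"
    unfolding Vr_def
    by (intro arg_cong2[where f = "(*)"] avar_mod bvar_mod) (simp_all only: int_rel modL1)
  moreover have "PVar (2, ?r) \<in> Cab n" unfolding Cab_Vpoly using rel_lt by (intro Vpoly_var) auto
  ultimately show ?case by (intro exI[of _ "PVar (2, ?r)"]) (simp add: sG_def)
next
  case (add p q)
  then obtain P Q where "P \<in> Cab n" "p = evp sG P" "Q \<in> Cab n" "q = evp sG Q" by blast
  then show ?case by (intro exI[of _ "P + Q"]) (simp add: evp_add Cab_Vpoly Vpoly_add)
next
  case (mult p q)
  then obtain P Q where "P \<in> Cab n" "p = evp sG P" "Q \<in> Cab n" "q = evp sG Q" by blast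
  then show ?case by (intro exI[of _ "P * Q"]) (simp add: evp_mult Cab_Vpoly Vpoly_mult)
qed

definition Pk :: "nat \<Rightarrow> cpoly" where
  "Pk m = (\<Sum>k<Suc m. (\<Prod>j<k. Br j) * (\<Prod>j\<in>{k+1..<Suc m}. Ar j))"

lemma kappa_Pk: "kappa n (int i) = Pk (n - 1)"
  using npos by (simp add: kappa_def Pk_def Ar_def Br_def)

lemma Pk_0: "Pk 0 = 1" by (simp add: Pk_def)

lemma Pk_Suc: "Pk (Suc m) = Ar (Suc m) * Pk m + (\<Prod>j<Suc m. Br j)"
proof -
  have "Pk (Suc m) = (\<Sum>k<Suc m. (\<Prod>j<k. Br j) * (\<Prod>j\<in>{k+1..<Suc (Suc m)}. Ar j))
      + (\<Prod>j<Suc m. Br j)"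
    by (simp add: Pk_def)
  also have "(\<Sum>k<Suc m. (\<Prod>j<k. Br j) * (\<Prod>j\<in>{k+1..<Suc (Suc m)}. Ar j))
      = (\<Sum>k<Suc m. Ar (Suc m) * ((\<Prod>j<k. Br j) * (\<Prod>j\<in>{k+1..<Suc m}. Ar j)))"
  proof (rule sum.cong[OF refl])
    fix k assume "k \<in> {..<Suc m}"
    then have "k + 1 \<le> Suc m" by simp
    then have "(\<Prod>j\<in>{k+1..<Suc (Suc m)}. Ar j) = (\<Prod>j\<in>{k+1..<Suc m}. Ar j) * Ar (Suc m)"
      by (rule prod.atLeastLessThan_Suc)
    then show "(\<Prod>j<k. Br j) * (\<Prod>j\<in>{k+1..<Suc (Suc m)}. Ar j) = Ar (Suc m) * ((\<Prod>j<k. Br j) * (\<Prod>j\<in>{k+1..<Suc m}. Ar j))"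
      by (simp add: ac_simps)
  qed
  also have "\<dots> = Ar (Suc m) * (\<Sum>k<Suc m. (\<Prod>j<k. Br j) * (\<Prod>j\<in>{k+1..<Suc m}. Ar j))"
    by (simp only: sum_distrib_left)
  also have "\<dots> = Ar (Suc m) * Pk m" by (simp only: Pk_def)
  finally show ?thesis .
qed

fun Qk :: "nat \<Rightarrow> cpoly" where
  "Qk 0 = 1"
| "Qk (Suc 0) = Ur 1"
| "Qk (Suc (Suc m)) = Ur (Suc (Suc m)) * Qk (Suc m) - Vr (Suc m) * Qk m"

lemma Ur_AB: "Ur (Suc r) = Ar (Suc r) + Br r"
  by (simp add: Ur_def Ar_def Br_def algebra_simps)

lemma Vr_AB: "Vr r = Ar r * Br r"
  by (simp add: Vr_def Ar_def Br_def)

lemma Qk_Suc: "Qk (Suc m) = Ar (Suc m) * Qk m + (\<Prod>j<Suc m. Br j)"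
proof (induction m)
  case 0
  then show ?case using Ur_AB[of 0] by simp
next
  case (Suc m)
  have "Qk (Suc (Suc m)) = (Ar (Suc (Suc m)) + Br (Suc m)) * Qk (Suc m) - Ar (Suc m) * Br (Suc m) * Qk m"
    by (simp add: Ur_AB Vr_AB)
  also have "\<dots> = Ar (Suc (Suc m)) * Qk (Suc m) + Br (Suc m) * (Qk (Suc m) - Ar (Suc m) * Qk m)"
    by (simp add: algebra_simps)
  also have "Qk (Suc m) - Ar (Suc m) * Qk m = (\<Prod>j<Suc m. Br j)" using Suc by simp
  also have "Br (Suc m) * (\<Prod>j<Suc m. Br j) = (\<Prod>j<Suc (Suc m). Br j)" by (simp add: ac_simps)
  finally show ?case .
qed

lemma Pk_Qk: "Pk m = Qk m"
  by (induction m) (simp_all add: Pk_0 Pk_Suc Qk_Suc)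

lemma Qk_LSym: "Qk m \<in> LSym n"
  by (induction m rule: Qk.induct) (auto intro: LSym_one Ur_LSym Vr_LSym LSym_diff LSym.mult)

lemma kappa_LSym: "kappa n (int i) \<in> LSym n"
  using Qk_LSym by (simp add: kappa_Pk Pk_Qk)

end


lemma mono_lessI:
  fixes A B :: "var \<Rightarrow>\<^sub>0 nat"
  assumes "lk A w < lk B w" "\<And>k'. k' < w \<Longrightarrow> lk A k' = 0 \<and> lk B k' = 0"
  shows "A < B"
  unfolding mono_less_iff using assms by (intro exI[of _ w]) auto

context lsetup begin

definition S :: "nat \<Rightarrow> (var \<Rightarrow>\<^sub>0 nat)" where "S m = (\<Sum>r\<in>{r. r < m \<and> odd r}. lV r)"
definition lam :: "nat \<Rightarrow> (var \<Rightarrow>\<^sub>0 nat)" where "lam m = S m + (if odd m then sg (1, m) 1 else 0)"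

lemma S_0: "S 0 = 0" by (simp add: S_def)

lemma S_Suc: "S (Suc m) = S m + (if odd m then lV m else 0)"
proof (cases "odd m")
  case True
  have "{r. r < Suc m \<and> odd r} = insert m {r. r < m \<and> odd r}" using True by auto
  then show ?thesis using True by (simp add: S_def add.commute)
next
  case False
  have "{r. r < Suc m \<and> odd r} = {r. r < m \<and> odd r}" using False by (auto simp: less_Suc_eq)
  then show ?thesis using False by (simp add: S_def)
qed

lemma kB_odd: "odd r \<Longrightarrow> kB r = (2, r)" by (simp add: kB_def)
lemma kB_even: "even r \<Longrightarrow> r + 2 \<le> n \<Longrightarrow> kB r = (0, r)" by (simp add: kB_def)

lemma lV_odd: "odd r \<Longrightarrow> lV r = sg (0, r - 1) 1 + sg (2, r) 1" by (simp add: lV_def kB_odd)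
lemma lV_even: "even r \<Longrightarrow> r + 2 \<le> n \<Longrightarrow> lV r = sg (1, r) 1 + sg (0, r) 1" by (simp add: lV_def kB_even)

lemma cmp_even:
  "sg (1, m + 2) 1 + sg (1, m + 1) 1 < sg (0, m) 1 + (sg (2, m + 1) 1 :: var \<Rightarrow>\<^sub>0 nat)"
proof (rule mono_lessI[of _ "(0, m)"])
  show "lk (sg (1, m + 2) 1 + sg (1, m + 1) 1) (0, m) < lk (sg (0, m) 1 + (sg (2, m + 1) 1 :: var \<Rightarrow>\<^sub>0 nat)) (0, m)"
    by (auto simp: lookup_add lookup_single when_def)
  fix k' :: var assume "k' < (0, m)"
  then obtain a b where "k' = (a, b)" "a = 0" "b < m" by (cases k') auto
  then show "lk (sg (1, m + 2) 1 + sg (1, m + 1) 1) k' = 0 \<and> lk (sg (0, m) 1 + (sg (2, m + 1) 1 :: var \<Rightarrow>\<^sub>0 nat)) k' = 0"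
    by (auto simp: lookup_add lookup_single when_def)
qed

lemma cmp_odd:
  "m \<ge> 1 \<Longrightarrow> sg (1, m + 1) 1 + sg (0, m + 1) 1 + sg (1, m) 1 < sg (1, m + 2) 1 + sg (0, m - 1) 1 + (sg (2, m) 1 :: var \<Rightarrow>\<^sub>0 nat)"
proof (rule mono_lessI[of _ "(0, m - 1)"])
  assume "m \<ge> 1"
  then show "lk (sg (1, m + 1) 1 + sg (0, m + 1) 1 + sg (1, m) 1) (0, m - 1) < lk (sg (1, m + 2) 1 + sg (0, m - 1) 1 + (sg (2, m) 1 :: var \<Rightarrow>\<^sub>0 nat)) (0, m - 1)"
    by (auto simp: lookup_add lookup_single when_def)
  fix k' :: var assume "k' < (0, m - 1)"
  then obtain a b where "k' = (a, b)" "a = 0" "b < m - 1" by (cases k') auto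
  then show "lk (sg (1, m + 1) 1 + sg (0, m + 1) 1 + sg (1, m) 1) k' = 0 \<and> lk (sg (1, m + 2) 1 + sg (0, m - 1) 1 + (sg (2, m) 1 :: var \<Rightarrow>\<^sub>0 nat)) k' = 0"
    by (auto simp: lookup_add lookup_single when_def)
qed

lemma th_Qk: "m < n \<Longrightarrow> th (Qk m) \<noteq> 0 \<and> lm (th (Qk m)) = lam m"
proof (induction m rule: Qk.induct)
  case 1
  then show ?case by (simp add: lam_def S_0)
next
  case 2
  then show ?case by (simp add: th_U lam_def S_Suc S_0)
next
  case (3 m)
  have IH1: "th (Qk (Suc m)) \<noteq> 0" "lm (th (Qk (Suc m))) = lam (Suc m)" using 3 by auto
  have IH0: "th (Qk m) \<noteq> 0" "lm (th (Qk m)) = lam m" using 3 by auto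
  let ?p = "PVar (1, Suc (Suc m)) * th (Qk (Suc m))"
  let ?q = "th (Vr (Suc m)) * th (Qk m)"
  have e: "th (Qk (Suc (Suc m))) = ?p - ?q"
    using 3(3) by (simp add: th_diff th_mult th_U)
  have pnz: "?p \<noteq> 0" using IH1 by simp
  have qnz: "?q \<noteq> 0" using IH0 lm_thV(1)[of "Suc m"] 3(3) by simp
  have lp: "lm ?p = sg (1, Suc (Suc m)) 1 + lam (Suc m)"
    using lm_mult(1)[OF PVar_nz IH1(1)] IH1(2) by simp
  have lq: "lm ?q = lV (Suc m) + lam m"
    using lm_mult(1)[OF lm_thV(1) IH0(1), of "Suc m"] lm_thV(2)[of "Suc m"] IH0(2) 3(3) by simp
  show ?case
  proof (cases "even m")
    case True
    have l1: "lam (Suc m) = S m + sg (1, m + 1) 1" using True by (simp add: lam_def S_Suc)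
    have l0: "lam m = S m" using True by (simp add: lam_def)
    have l2: "lam (Suc (Suc m)) = S m + lV (Suc m)" using True by (simp add: lam_def S_Suc)
    have lv: "lV (Suc m) = sg (0, m) 1 + sg (2, m + 1) 1" using True lV_odd[of "Suc m"] by simp
    have "lm ?p = (sg (1, m + 2) 1 + sg (1, m + 1) 1) + S m" using lp l1 by (simp add: ac_simps)
    also have "\<dots> < (sg (0, m) 1 + sg (2, m + 1) 1) + S m"
      by (rule add_strict_right_mono[OF cmp_even])
    also have "\<dots> = lm ?q" using lq l0 lv by (simp add: ac_simps)
    finally have "lm ?p < lm ?q" .
    then have "?p - ?q \<noteq> 0" "lm (?p - ?q) = lm ?q" using lm_diff_big[OF qnz] by auto
    moreover have "lm ?q = lam (Suc (Suc m))" using lq l0 l2 by (simp add: ac_simps)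
    ultimately show ?thesis using e by simp
  next
    case False
    then have m1: "m \<ge> 1" by (cases m) auto
    have l1: "lam (Suc m) = S m + lV m" using False by (simp add: lam_def S_Suc)
    have l0: "lam m = S m + sg (1, m) 1" using False by (simp add: lam_def)
    have l2: "lam (Suc (Suc m)) = S m + lV m + sg (1, m + 2) 1" using False by (simp add: lam_def S_Suc)
    have lvm: "lV m = sg (0, m - 1) 1 + sg (2, m) 1" using False lV_odd[of m] by simp
    have lv: "lV (Suc m) = sg (1, m + 1) 1 + sg (0, m + 1) 1" using False 3(3) lV_even[of "Suc m"] by simp
    have "lm ?q = (sg (1, m + 1) 1 + sg (0, m + 1) 1 + sg (1, m) 1) + S m" using lq l0 lv by (simp add: ac_simps)
    also have "\<dots> < (sg (1, m + 2) 1 + sg (0, m - 1) 1 + sg (2, m) 1) + S m"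
      by (rule add_strict_right_mono[OF cmp_odd[OF m1]])
    also have "\<dots> = lm ?p" using lp l1 lvm by (simp add: ac_simps)
    finally have "lm ?q < lm ?p" .
    then have "?p - ?q \<noteq> 0" "lm (?p - ?q) = lm ?p" using lm_diff[OF pnz] by auto
    moreover have "lm ?p = lam (Suc (Suc m))" using lp l1 l2 by (simp add: ac_simps)
    ultimately show ?thesis using e by simp
  qed
qed

lemma th_kappa: "th (kappa n (int i)) \<noteq> 0 \<and> lm (th (kappa n (int i))) = lam (n - 1)"
  using th_Qk[of "n - 1"] npos by (simp add: kappa_Pk Pk_Qk)

end


context lsetup begin

definition ell :: "var \<Rightarrow> (var \<Rightarrow>\<^sub>0 nat)" where
  "ell v = (if fst v = 1 then sg (1, snd v) 1 else lV (snd v))"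

lemma th_sG: "v \<in> Cv \<Longrightarrow> th (sG v) \<noteq> 0 \<and> lm (th (sG v)) = ell v"
  by (auto simp: sG_def ell_def th_U lm_thV)

definition Xm :: "(var \<Rightarrow>\<^sub>0 nat) \<Rightarrow> cpoly" where "Xm m = th (monom sG m)"

lemma th_zero[simp]: "th 0 = 0" by (simp add: th_def)

lemma Xm_prod: "Xm m = (\<Prod>v\<in>ks m. th (sG v) ^ lk m v)"
  unfolding Xm_def th_def evp_monom by (simp add: monom_def)

definition F :: "var \<Rightarrow> (var \<Rightarrow>\<^sub>0 nat) \<Rightarrow> nat" where
  "F x m = (\<Sum>v\<in>Cv. lk m v * lk (ell v) x)"

lemma Xm_lm: assumes "ks m \<subseteq> Cv" shows "Xm m \<noteq> 0" "lk (lm (Xm m)) x = F x m"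
proof -
  have nz: "th (sG v) \<noteq> 0" if "v \<in> ks m" for v using th_sG[OF subsetD[OF assms that]] by (rule conjunct1)
  have h: "(\<Prod>v\<in>ks m. th (sG v) ^ lk m v) \<noteq> 0 \<and>
      lk (lm (\<Prod>v\<in>ks m. th (sG v) ^ lk m v)) x = (\<Sum>v\<in>ks m. lk m v * lk (lm (th (sG v))) x)"
    by (rule lm_prod_pow[OF finite_keys nz])
  then show "Xm m \<noteq> 0" by (simp add: Xm_prod)
  have "(\<Sum>v\<in>ks m. lk m v * lk (lm (th (sG v))) x) = (\<Sum>v\<in>ks m. lk m v * lk (ell v) x)"
    using th_sG assms by (intro sum.cong) auto
  also have "\<dots> = F x m" unfolding F_def
    by (rule sum.mono_neutral_left) (use assms in \<open>auto simp: in_keys_iff\<close>)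
  finally show "lk (lm (Xm m)) x = F x m" using h by (simp add: Xm_prod)
qed

lemma lk_ell: "lk (ell v) x = (if fst v = 1 then (if x = (1, snd v) then 1 else 0)
   else (if odd (snd v) then (if x = (0, snd v - 1) then 1 else 0) else (if x = (1, snd v) then 1 else 0))
        + (if x = kB (snd v) then 1 else 0))"
  by (auto simp: ell_def lV_def lookup_add lookup_single when_def)

lemma sum_delta_Cv: "a \<in> Cv \<Longrightarrow> (\<Sum>v\<in>Cv. if v = a then f v else 0) = (f a :: nat)"
  by (simp add: sum.delta')

lemma F1: assumes "t < n" shows "F (1, t) m = lk m (1, t) + (if even t then lk m (2, t) else 0)"
proof -
  have "F (1, t) m = (\<Sum>v\<in>Cv. (if v = (1, t) then lk m v else 0) + (if v = (2, t) then (if even t then lk m v else 0) else 0))"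
    unfolding F_def by (rule sum.cong) (auto simp: lk_ell kB_def)
  also have "\<dots> = lk m (1, t) + (if even t then lk m (2, t) else 0)"
    using assms by (simp add: sum.distrib sum.delta')
  finally show ?thesis .
qed

lemma F2: assumes "t < n" "\<not> (even t \<and> t + 2 \<le> n)" shows "F (2, t) m = lk m (2, t)"
proof -
  have "F (2, t) m = (\<Sum>v\<in>Cv. (if v = (2, t) then lk m v else 0))"
    unfolding F_def using assms(2) by (intro sum.cong) (auto simp: lk_ell kB_def)
  also have "\<dots> = lk m (2, t)"
    using assms by (simp add: sum.delta')
  finally show ?thesis .
qed

lemma F0: assumes "even t" "t + 2 \<le> n" shows "F (0, t) m = lk m (2, t) + lk m (2, t + 1)"
proof -
  have "F (0, t) m = (\<Sum>v\<in>Cv. (if v = (2, t) then lk m v else 0) + (if v = (2, t + 1) then lk m v else 0))"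
    unfolding F_def using assms by (intro sum.cong) (auto simp: lk_ell kB_def elim: oddE)
  also have "\<dots> = lk m (2, t) + lk m (2, t + 1)"
    using assms by (simp add: sum.distrib sum.delta')
  finally show ?thesis .
qed

lemma Xm_inj:
  assumes "ks m1 \<subseteq> Cv" "ks m2 \<subseteq> Cv" "lm (Xm m1) = lm (Xm m2)"
  shows "m1 = m2"
proof -
  have Fe: "F x m1 = F x m2" for x using Xm_lm(2)[OF assms(1), of x] Xm_lm(2)[OF assms(2), of x] assms(3) by simp
  have a: "lk m1 (2, t) = lk m2 (2, t)" if "t < n" "\<not> (even t \<and> t + 2 \<le> n)" for t
    using Fe[of "(2, t)"] F2[OF that, of m1] F2[OF that, of m2] by simp
  have b: "lk m1 (2, t) = lk m2 (2, t)" if "t < n" for t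
  proof (cases "even t \<and> t + 2 \<le> n")
    case True
    have "lk m1 (2, t + 1) = lk m2 (2, t + 1)" using True by (intro a) auto
    then show ?thesis using Fe[of "(0, t)"] F0[of t m1] F0[of t m2] True by simp
  next
    case False
    then show ?thesis using a that by simp
  qed
  have c: "lk m1 (1, t) = lk m2 (1, t)" if "t < n" for t
    using Fe[of "(1, t)"] F1[OF that, of m1] F1[OF that, of m2] b[OF that] by (cases "even t") auto
  show ?thesis
  proof (rule poly_mapping_eqI)
    fix v :: var
    show "lk m1 v = lk m2 v"
    proof (cases "v \<in> Cv")
      case True
      then obtain s r where "v = (s, r)" "s = 1 \<or> s = 2" "r < n" by auto
      then show ?thesis using b c by auto
    next
      case False
      then have "v \<notin> ks m1" "v \<notin> ks m2" using assms(1,2) by auto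
      then show ?thesis by (simp add: in_keys_iff)
    qed
  qed
qed

lemma Xm_add: "Xm (a + b) = Xm a * Xm b"
  by (simp add: Xm_def monom_add th_mult)

lemma ks_add_sub: "ks a \<subseteq> K \<Longrightarrow> ks b \<subseteq> K \<Longrightarrow> ks (a + b) \<subseteq> (K :: var set)"
  using keys_add[of a b] by auto

lemma Xm_lm_add: "ks a \<subseteq> Cv \<Longrightarrow> ks b \<subseteq> Cv \<Longrightarrow> lm (Xm (a + b)) = lm (Xm a) + lm (Xm b)"
  using lm_mult(1)[OF Xm_lm(1) Xm_lm(1), of a b] by (simp add: Xm_add)

lemma Xm_single: "Xm (sg v 1) = th (sG v)"
  by (simp add: Xm_def monom_def)

lemma Xm_zero: "Xm 0 = 1" by (simp add: Xm_def)

definition Rk :: "nat set" where "Rk = {r. r < n - 1 \<and> odd r}"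
definition mk :: "var \<Rightarrow>\<^sub>0 nat" where
  "mk = (\<Sum>r\<in>Rk. sg (2, r) 1) + (if odd (n - 1) then sg (1, n - 1) 1 else 0)"

lemma sum_part:
  assumes "finite R" "R \<subseteq> {..<n}"
  shows "ks (\<Sum>r\<in>R. sg (2, r) (1::nat)) \<subseteq> Cv \<and> lm (Xm (\<Sum>r\<in>R. sg (2, r) 1)) = (\<Sum>r\<in>R. lV r)"
  using assms
proof (induction R rule: finite_induct)
  case empty
  then show ?case by (simp add: Xm_zero)
next
  case (insert a R)
  have ka: "ks (sg (2, a) (1::nat)) \<subseteq> Cv" using insert.prems by auto
  have Rsub: "R \<subseteq> {..<n}" using insert.prems by simp
  note IH0 = insert.IH[OF Rsub]
  note IH = conjunct1[OF IH0] conjunct2[OF IH0]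
  have e: "(\<Sum>r\<in>insert a R. sg (2, r) (1::nat)) = sg (2, a) 1 + (\<Sum>r\<in>R. sg (2, r) 1)"
    using insert.hyps by (simp add: sum.insert)
  have a2: "(2, a) \<in> Cv" using insert.prems by simp
  have "lm (Xm (sg (2, a) 1)) = lV a"
  proof -
    have "lm (Xm (sg (2, a) 1)) = lm (th (sG (2, a)))" by (simp only: Xm_single)
    also have "\<dots> = ell (2, a)" using th_sG[OF a2] by (rule conjunct2)
    also have "ell (2, a) = lV a" by (simp add: ell_def)
    finally show ?thesis .
  qed
  then have "lm (Xm (\<Sum>r\<in>insert a R. sg (2, r) 1)) = lV a + (\<Sum>r\<in>R. lV r)"
    unfolding e using Xm_lm_add[OF ka IH(1)] IH(2) by simp
  moreover have "ks (\<Sum>r\<in>insert a R. sg (2, r) (1::nat)) \<subseteq> Cv" unfolding e by (rule ks_add_sub[OF ka IH(1)])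
  ultimately show ?case using insert.hyps by (simp add: sum.insert)
qed

lemma mk_props: "ks mk \<subseteq> Cv \<and> lm (Xm mk) = lam (n - 1)"
proof -
  have R: "finite Rk" "Rk \<subseteq> {..<n}" by (auto simp: Rk_def)
  have sp: "ks (\<Sum>r\<in>Rk. sg (2, r) (1::nat)) \<subseteq> Cv" "lm (Xm (\<Sum>r\<in>Rk. sg (2, r) 1)) = S (n - 1)"
    using sum_part[OF R] by (auto simp: S_def Rk_def)
  show ?thesis
  proof (cases "odd (n - 1)")
    case True
    have k1: "ks (sg (1, n - 1) (1::nat)) \<subseteq> Cv" using npos by auto
    have "Xm (sg (1, n - 1) 1) = th (Ur (n - 1))" by (simp only: Xm_single) (simp add: sG_def)
    then have "lm (Xm (sg (1, n - 1) 1)) = sg (1, n - 1) 1"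
      using npos by (simp add: th_U)
    have e: "mk = (\<Sum>r\<in>Rk. sg (2, r) 1) + sg (1, n - 1) 1" by (simp only: mk_def if_P[OF True])
    have l: "lam (n - 1) = S (n - 1) + sg (1, n - 1) 1" by (simp only: lam_def if_P[OF True])
    have "ks mk \<subseteq> Cv" unfolding e by (rule ks_add_sub[OF sp(1) k1])
    moreover have "lm (Xm mk) = lam (n - 1)"
      unfolding e l Xm_lm_add[OF sp(1) k1] sp(2) \<open>lm (Xm (sg (1, n - 1) 1)) = sg (1, n - 1) 1\<close> ..
    ultimately show ?thesis by (intro conjI)
  next
    case False
    have e: "mk = (\<Sum>r\<in>Rk. sg (2, r) 1)" by (simp only: mk_def if_not_P[OF False] add_0_right)
    have l: "lam (n - 1) = S (n - 1)" by (simp only: lam_def if_not_P[OF False] add_0_right)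
    show ?thesis unfolding e l using sp by (intro conjI)
  qed
qed

lemma keys_mk: "v \<in> ks mk \<Longrightarrow> (\<exists>r. v = (2, r) \<and> odd r \<and> r < n) \<or> (v = (1, n - 1) \<and> odd (n - 1))"
proof -
  assume v: "v \<in> ks mk"
  have "v \<in> ks (\<Sum>r\<in>Rk. sg (2, r) (1::nat)) \<union> ks (if odd (n - 1) then sg (1, n - 1) 1 else (0 :: var \<Rightarrow>\<^sub>0 nat))"
    using subsetD[OF keys_add v[unfolded mk_def]] .
  then show ?thesis
  proof
    assume "v \<in> ks (\<Sum>r\<in>Rk. sg (2, r) (1::nat))"
    then have "v \<in> (\<Union>r\<in>Rk. ks (sg (2, r) (1::nat)))" by (rule subsetD[OF keys_sum])
    then show ?thesis by (auto simp: Rk_def)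
  next
    assume "v \<in> ks (if odd (n - 1) then sg (1, n - 1) 1 else (0 :: var \<Rightarrow>\<^sub>0 nat))"
    then show ?thesis by (auto split: if_splits)
  qed
qed

lemma saturate:
  assumes "ks m \<subseteq> Cv" "lm (Xm m) = lam (n - 1) + \<mu>"
  shows "\<exists>m'. ks m' \<subseteq> Cv \<and> lm (Xm m') = \<mu>"
proof -
  have mk: "ks mk \<subseteq> Cv" "lm (Xm mk) = lam (n - 1)" using mk_props by auto
  have Fm: "F x m = F x mk + lk \<mu> x" for x
    using Xm_lm(2)[OF assms(1), of x] Xm_lm(2)[OF mk(1), of x] assms(2) mk(2) by (simp add: lookup_add)
  have le: "lk mk v \<le> lk m v" for v
  proof (cases "v \<in> ks mk")
    case False
    then show ?thesis by (simp add: in_keys_iff)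
  next
    case True
    from keys_mk[OF True] show ?thesis
    proof
      assume "\<exists>r. v = (2, r) \<and> odd r \<and> r < n"
      then obtain r where r: "v = (2, r)" "odd r" "r < n" by blast
      have c: "\<not> (even r \<and> r + 2 \<le> n)" using r by simp
      show ?thesis using Fm[of "(2, r)"] F2[OF r(3) c, of m] F2[OF r(3) c, of mk] r(1) by simp
    next
      assume r: "v = (1, n - 1) \<and> odd (n - 1)"
      have "n - 1 < n" using npos by simp
      then show ?thesis using Fm[of "(1, n - 1)"] F1[of "n - 1" m] F1[of "n - 1" mk] r by simp
    qed
  qed
  define m' where "m' = m - mk"
  have eq: "m = mk + m'"
    by (rule poly_mapping_eqI) (simp add: m'_def lookup_add lookup_minus le)
  have km': "ks m' \<subseteq> Cv"
  proof
    fix v assume "v \<in> ks m'"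
    then have "lk m v \<noteq> 0" by (auto simp: m'_def lookup_minus in_keys_iff)
    then show "v \<in> Cv" using assms(1) by (auto simp: in_keys_iff)
  qed
  have "lam (n - 1) + lm (Xm m') = lam (n - 1) + \<mu>"
    using Xm_lm_add[OF mk(1) km'] eq assms(2) mk(2) by simp
  then have "lm (Xm m') = \<mu>" by simp
  then show ?thesis using km' by blast
qed

lemma th_evp_sG: "th (evp sG P) = (\<Sum>m\<in>ks P. PConst (lk P m) * Xm m)"
  by (simp add: th_def evp_def[of sG P] evp_sum evp_smult Xm_def)

lemma main:
  assumes "q \<in> Cab n" "kappa n (int i) * q \<in> LSym n"
  shows "q \<in> LSym n"
proof -
  define K :: "var set" where "K = {0,1,2} \<times> {..<n}"
  define R where "R = {(\<mu>::var \<Rightarrow>\<^sub>0 nat, \<nu>). ks \<mu> \<subseteq> K \<and> ks \<nu> \<subseteq> K \<and> \<mu> < \<nu>}"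
  have wfR: "wf R" unfolding R_def by (rule wf_mono_rel) (simp add: K_def)
  let ?k = "kappa n (int i)"
  have thk: "th ?k \<noteq> 0" "lm (th ?k) = lam (n - 1)" using th_kappa by auto
  have P: "ks \<mu> \<subseteq> K \<longrightarrow> (\<forall>q. q \<in> Cab n \<and> ?k * q \<in> LSym n \<and> q \<noteq> 0 \<and> lm (th q) = \<mu> \<longrightarrow> q \<in> LSym n)" for \<mu>
  proof (induction \<mu> rule: wf_induct_rule[OF wfR])
    case (1 \<mu>)
    show ?case
    proof (intro impI allI)
      fix q assume "ks \<mu> \<subseteq> K" and q: "q \<in> Cab n \<and> ?k * q \<in> LSym n \<and> q \<noteq> 0 \<and> lm (th q) = \<mu>"
      have thq: "th q \<noteq> 0" using q th_inj by blast
      obtain P where P: "P \<in> Cab n" "?k * q = evp sG P" using LSym_repr q by blast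
      have thkq: "th (?k * q) \<noteq> 0" "lm (th (?k * q)) = lam (n - 1) + \<mu>"
        using thk thq q lm_mult(1)[OF thk(1) thq] by (auto simp: th_mult)
      have Pnz: "P \<noteq> 0" using thkq(1) P(2) by (auto simp: th_def)
      have kP: "ks m \<subseteq> Cv" if "m \<in> ks P" for m using P(1) that by (auto simp: Cab_def)
      have "(\<Sum>m\<in>ks P. PConst (lk P m) * Xm m) \<noteq> 0 \<and>
          (\<exists>m\<in>ks P. lm (\<Sum>m\<in>ks P. PConst (lk P m) * Xm m) = lm (Xm m))"
      proof (rule lm_sum_distinct)
        show "finite (ks P)" by simp
        show "ks P \<noteq> {}" using Pnz by simp
        show "lk P m \<noteq> 0" if "m \<in> ks P" for m using that by (simp add: in_keys_iff)
        show "Xm m \<noteq> 0" if "m \<in> ks P" for m using Xm_lm(1)[OF kP[OF that]] .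
        show "inj_on (\<lambda>m. lm (Xm m)) (ks P)"
          by (rule inj_onI) (rule Xm_inj[OF kP kP])
      qed
      then obtain ms where ms: "ms \<in> ks P" "lm (th (?k * q)) = lm (Xm ms)"
        using P(2) th_evp_sG by auto
      have "lm (Xm ms) = lam (n - 1) + \<mu>" using ms(2) thkq(2) by simp
      then obtain m' where m': "ks m' \<subseteq> Cv" "lm (Xm m') = \<mu>"
        using saturate[OF kP[OF ms(1)]] by blast
      define M where "M = monom sG m'"
      have M: "M \<in> LSym n" "M \<in> Cab n" "th M \<noteq> 0" "lm (th M) = \<mu>"
        using monom_LSym[OF m'(1)] monom_Cab[OF m'(1)] Xm_lm(1)[OF m'(1)] m'(2)
        by (auto simp: M_def Xm_def)
      define c where "c = lc (th q) / lc (th M)"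
      have c: "c \<noteq> 0" using lc_nz[OF thq] lc_nz[OF M(3)] by (simp add: c_def)
      define q' where "q' = q - PConst c * M"
      have r: "PConst c * th M \<noteq> 0" "lm (PConst c * th M) = lm (th q)" "lc (PConst c * th M) = lc (th q)"
        using lm_PConst_mult[OF c M(3)] M(4) q lc_nz[OF M(3)] by (auto simp: c_def)
      have thq': "th q' = th q - PConst c * th M" by (simp add: q'_def th_diff th_mult)
      have q'Cab: "q' \<in> Cab n" unfolding q'_def using q M(2)
        by (simp add: Cab_Vpoly Vpoly_diff Vpoly_mult)
      have q'L: "?k * q' \<in> LSym n"
      proof -
        have "?k * q' = ?k * q - PConst c * (?k * M)" by (simp add: q'_def algebra_simps)
        moreover have "PConst c * (?k * M) \<in> LSym n"
          by (intro LSym_smult LSym.mult kappa_LSym M(1))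
        ultimately show ?thesis using q LSym_diff by simp
      qed
      have qeq: "q = q' + PConst c * M" by (simp add: q'_def)
      show "q \<in> LSym n"
      proof (cases "q' = 0")
        case True
        then show ?thesis using qeq M(1) by (simp add: LSym_smult)
      next
        case False
        have thq'nz: "th q' \<noteq> 0" using False th_inj by blast
        have lt: "lm (th q') < \<mu>"
          using lm_cancel[OF thq r(1) r(2)[symmetric] r(3)[symmetric]] thq'nz thq' q by simp
        have kq': "ks (lm (th q')) \<subseteq> K"
          using Vpoly_lm[OF th_Vpoly[OF q'Cab] thq'nz] by (simp add: K_def)
        have "(lm (th q'), \<mu>) \<in> R" using kq' \<open>ks \<mu> \<subseteq> K\<close> lt by (simp add: R_def)
        then have "q' \<in> LSym n" using 1 kq' q'Cab q'L False by blast
        then show ?thesis using qeq M(1) by (simp add: LSym.add LSym_smult)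
      qed
    qed
  qed
  show ?thesis
  proof (cases "q = 0")
    case True
    then show ?thesis using LSym.const[of 0 n] by simp
  next
    case False
    have "th q \<noteq> 0" using False th_inj by blast
    then have "ks (lm (th q)) \<subseteq> K"
      using Vpoly_lm[OF th_Vpoly[OF assms(1)]] by (simp add: K_def)
    then show ?thesis using P[of "lm (th q)"] assms False by blast
  qed
qed

end

theorem lemmaB4:
  fixes n :: nat and i :: nat and g :: cpoly
  assumes "i \<in> {1..n}"
    and "g \<in> LSym n" and "g \<noteq> 0"
    and "\<exists>h \<in> Cab n. g = kappa n (int i) * h"
  shows "\<exists>h \<in> LSym n. g = kappa n (int i) * h"
proof -
  have n: "0 < n" using assms(1) by simp
  interpret lsetup n i by (unfold_locales) (rule n)
  obtain h where h: "h \<in> Cab n" "g = kappa n (int i) * h" using assms(4) by blast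
  have "h \<in> LSym n" using main[OF h(1)] h(2) assms(2) by simp
  then show ?thesis using h(2) by blast
qed


end
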